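(* Let $q\in(0,\infty)$. For each choice of sign, all second-order minors of the infinite matrix $A^{\pm}=(\alpha^{\pm}_{kn})_{k,n\ge0}$ are non-negative; in particular $\alpha^{\pm}_{k,n}\alpha^{\pm}_{k+1,n+1}-\alpha^{\pm}_{k+1,n}\alpha^{\pm}_{k,n+1}\ge0$ for all $k,n\ge0$.
   Context: For $q>0$ and integers $k,n\ge 0$ ($k$ the row index, $n$ the column index), define $$\alpha^{\pm}_{kn}=\frac{k!\,\Gamma(n+2q)}{2^{n+k+2q}}\sum_{m=0}^{\min\{n,k\}}\frac{1\pm(-1)^m}{\Gamma(m+2q)\,m!\,(n-m)!\,(k-m)!}.$$ *)

theory Defs
  imports "HOL-Analysis.Analysis"
begin

definition sgn_pm :: "bool \<Rightarrow> real" where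
  "sgn_pm b = (if b then 1 else -1)"

definition alpha :: "bool \<Rightarrow> real \<Rightarrow> nat \<Rightarrow> nat \<Rightarrow> real" where
  "alpha pm q k n =
     fact k * Gamma (real n + 2 * q) / 2 powr (real n + real k + 2 * q) *
     (\<Sum>m = 0..min n k. (1 + sgn_pm pm * (-1) ^ m) /
        (Gamma (real m + 2 * q) * fact m * fact (n - m) * fact (k - m)))"

end

theory Submission imports Defs begin

lemma cb:
  fixes A B :: "nat \<Rightarrow> nat \<Rightarrow> real"
  assumes fin: "finite S"
    and hA: "\<And>m m'. m \<in> S \<Longrightarrow> m' \<in> S \<Longrightarrow> m < m' \<Longrightarrow> A k2 m * A k1 m' \<le> A k1 m * A k2 m'"
    and hB: "\<And>m m'. m \<in> S \<Longrightarrow> m' \<in> S \<Longrightarrow> m < m' \<Longrightarrow> B m n2 * B m' n1 \<le> B m n1 * B m' n2"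
  shows "(\<Sum>m\<in>S. A k1 m * B m n2) * (\<Sum>m\<in>S. A k2 m * B m n1) \<le> (\<Sum>m\<in>S. A k1 m * B m n1) * (\<Sum>m\<in>S. A k2 m * B m n2)"
proof -
  define D where "D m m' = B m n1 * B m' n2 - B m n2 * B m' n1" for m m'
  define T where "T = (\<Sum>m\<in>S. \<Sum>m'\<in>S. A k1 m * A k2 m' * D m m')"
  have T: "(\<Sum>m\<in>S. A k1 m * B m n1) * (\<Sum>m\<in>S. A k2 m * B m n2) - (\<Sum>m\<in>S. A k1 m * B m n2) * (\<Sum>m\<in>S. A k2 m * B m n1) = T"
    unfolding T_def D_def sum_product
    by (simp add: algebra_simps sum_subtractf[symmetric])
  have sw: "(\<Sum>m\<in>S. \<Sum>m'\<in>S. A k1 m' * A k2 m * D m m') = - T"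
  proof -
    have "(\<Sum>m\<in>S. \<Sum>m'\<in>S. A k1 m' * A k2 m * D m m') = (\<Sum>m'\<in>S. \<Sum>m\<in>S. A k1 m' * A k2 m * D m m')"
      by (rule sum.swap)
    also have "\<dots> = (\<Sum>m'\<in>S. \<Sum>m\<in>S. - (A k1 m' * A k2 m * D m' m))"
      unfolding D_def by (simp add: algebra_simps)
    also have "\<dots> = - T" unfolding T_def by (simp add: sum_negf)
    finally show ?thesis .
  qed
  have g: "0 \<le> (A k1 m * A k2 m' - A k1 m' * A k2 m) * D m m'" if "m \<in> S" "m' \<in> S" for m m'
  proof (cases m m' rule: linorder_cases)
    case less
    then show ?thesis using hA[OF that less] hB[OF that less] unfolding D_def
      by (intro mult_nonneg_nonneg) (auto simp: algebra_simps)
  next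
    case equal then show ?thesis unfolding D_def by simp
  next
    case greater
    then show ?thesis using hA[OF that(2,1) greater] hB[OF that(2,1) greater] unfolding D_def
      by (intro mult_nonpos_nonpos) (auto simp: algebra_simps)
  qed
  have "0 \<le> (\<Sum>m\<in>S. \<Sum>m'\<in>S. (A k1 m * A k2 m' - A k1 m' * A k2 m) * D m m')"
    using g by (intro sum_nonneg) auto
  also have "\<dots> = T - (\<Sum>m\<in>S. \<Sum>m'\<in>S. A k1 m' * A k2 m * D m m')"
    unfolding T_def by (simp add: algebra_simps sum_subtractf)
  also have "\<dots> = 2 * T" using sw by simp
  finally show ?thesis using T by linarith
qed

lemma fact_mono_aux: "(a::nat) \<le> b \<Longrightarrow> fact (a+d) * fact b \<le> (fact (b+d) * fact a :: nat)"
proof (induction d)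
  case 0 then show ?case by simp
next
  case (Suc d)
  have "fact (a + Suc d) * fact b = (a+d+1) * (fact (a+d) * fact b)" by (simp add: algebra_simps)
  also have "\<dots> \<le> (b+d+1) * (fact (b+d) * fact a)"
    by (rule mult_mono) (use Suc in auto)
  also have "\<dots> = fact (b + Suc d) * fact a" by (simp add: algebra_simps)
  finally show ?case .
qed

definition K :: "nat \<Rightarrow> nat \<Rightarrow> real" where
  "K k m = (if m \<le> k then 1 / fact (k - m) else 0)"

lemma K_nonneg: "0 \<le> K k m" by (simp add: K_def)

lemma K_tp2:
  assumes "k1 < k2" "m < m'"
  shows "K k1 m' * K k2 m \<le> K k1 m * K k2 m'"
proof (cases "m' \<le> k1")
  case False
  then show ?thesis by (simp add: K_def)
next
  case True
  define a where "a = k1 - m'"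
  define b where "b = k2 - m'"
  define d where "d = m' - m"
  have ab: "a \<le> b" using assms True by (simp add: a_def b_def)
  have e1: "k1 - m = a + d" "k2 - m = b + d" using assms True by (auto simp: a_def b_def d_def)
  have "fact (a+d) * fact b \<le> (fact (b+d) * fact a :: nat)" by (rule fact_mono_aux[OF ab])
  hence h: "(fact (a+d) * fact b :: real) \<le> fact (b+d) * fact a"
    by (metis of_nat_fact of_nat_le_iff of_nat_mult)
  have "K k1 m' * K k2 m = 1 / (fact a * fact (b+d))"
    using True assms by (simp add: K_def e1 a_def)
  also have "\<dots> \<le> 1 / (fact (a+d) * fact b)"
    using h by (intro divide_left_mono) (auto simp: mult.commute)
  also have "\<dots> = K k1 m * K k2 m'"
    using True assms by (simp add: K_def e1 b_def)
  finally show ?thesis .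
qed


definition w :: "bool \<Rightarrow> real \<Rightarrow> nat \<Rightarrow> real" where
  "w pm q m = (1 + sgn_pm pm * (-1) ^ m) / (Gamma (real m + 2 * q) * fact m)"

lemma w_nonneg: assumes "q > 0" shows "0 \<le> w pm q m"
proof -
  have "0 < Gamma (real m + 2 * q)" using assms by (intro Gamma_real_pos) auto
  moreover have "0 \<le> 1 + sgn_pm pm * (-1) ^ m"
    by (cases pm; cases "even m") (auto simp: sgn_pm_def)
  ultimately show ?thesis unfolding w_def by (intro divide_nonneg_pos) auto
qed

definition P :: "real \<Rightarrow> nat \<Rightarrow> nat \<Rightarrow> real" where
  "P q k n = fact k * Gamma (real n + 2 * q) / (2 ^ n * 2 ^ k * 2 powr (2 * q))"

lemma P_pos: assumes "q > 0" shows "0 < P q k n"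
proof -
  have "0 < Gamma (real n + 2 * q)" using assms by (intro Gamma_real_pos) auto
  then show ?thesis unfolding P_def by (intro divide_pos_pos mult_pos_pos) auto
qed

lemma P_swap: "P q k1 n2 * P q k2 n1 = P q k1 n1 * P q k2 n2"
  unfolding P_def by (simp add: field_simps)

lemma alpha_eq:
  assumes "min n k \<le> N"
  shows "alpha pm q k n = P q k n * (\<Sum>m\<in>{0..N}. w pm q m * K k m * K n m)"
proof -
  have pw: "(2::real) powr (real n + real k + 2 * q) = 2 ^ n * 2 ^ k * 2 powr (2 * q)"
    by (simp add: powr_add powr_realpow)
  have "(\<Sum>m = 0..min n k. (1 + sgn_pm pm * (-1) ^ m) /
        (Gamma (real m + 2 * q) * fact m * fact (n - m) * fact (k - m)))
     = (\<Sum>m\<in>{0..min n k}. w pm q m * K k m * K n m)"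
    by (intro sum.cong) (auto simp: w_def K_def)
  also have "\<dots> = (\<Sum>m\<in>{0..N}. w pm q m * K k m * K n m)"
    using assms by (intro sum.mono_neutral_left) (auto simp: K_def)
  finally show ?thesis unfolding alpha_def P_def pw by simp
qed

theorem proposition3p1:
  fixes q :: real
  assumes "q > 0"
  shows "\<forall>pm::bool.
           (\<forall>k1 k2 n1 n2 :: nat. k1 < k2 \<longrightarrow> n1 < n2 \<longrightarrow>
              alpha pm q k1 n1 * alpha pm q k2 n2 - alpha pm q k1 n2 * alpha pm q k2 n1 \<ge> 0)
         \<and> (\<forall>k n :: nat.
              alpha pm q k n * alpha pm q (k+1) (n+1) - alpha pm q (k+1) n * alpha pm q k (n+1) \<ge> 0)"
proof -
  have main: "alpha pm q k1 n1 * alpha pm q k2 n2 - alpha pm q k1 n2 * alpha pm q k2 n1 \<ge> 0"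
    if kk: "k1 < k2" and nn: "n1 < n2" for pm k1 k2 n1 n2
  proof -
    define N where "N = k2 + n2"
    define A where "A k m = w pm q m * K k m" for k m
    define B where "B m n = K n m" for m n
    define b where "b k n = (\<Sum>m\<in>{0..N}. A k m * B m n)" for k n
    have ab: "alpha pm q k n = P q k n * b k n" if "k \<le> k2" "n \<le> n2" for k n
      unfolding b_def A_def B_def using that
      by (subst alpha_eq[where N = N]) (auto simp: N_def mult.assoc)
    have "b k1 n2 * b k2 n1 \<le> b k1 n1 * b k2 n2"
      unfolding b_def
    proof (rule cb)
      fix m m' :: nat assume "m \<in> {0..N}" "m' \<in> {0..N}" "m < m'"
      have "K k1 m' * K k2 m \<le> K k1 m * K k2 m'" by (rule K_tp2[OF kk \<open>m < m'\<close>])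
      then have "(w pm q m * w pm q m') * (K k1 m' * K k2 m) \<le> (w pm q m * w pm q m') * (K k1 m * K k2 m')"
        using w_nonneg[OF assms] by (intro mult_left_mono) auto
      then show "A k2 m * A k1 m' \<le> A k1 m * A k2 m'" unfolding A_def by (simp add: algebra_simps)
    next
      fix m m' :: nat assume "m \<in> {0..N}" "m' \<in> {0..N}" "m < m'"
      have "K n1 m' * K n2 m \<le> K n1 m * K n2 m'" by (rule K_tp2[OF nn \<open>m < m'\<close>])
      then show "B m n2 * B m' n1 \<le> B m n1 * B m' n2" unfolding B_def by (simp add: algebra_simps)
    qed simp
    then have d: "0 \<le> b k1 n1 * b k2 n2 - b k1 n2 * b k2 n1" by simp
    have "alpha pm q k1 n1 * alpha pm q k2 n2 - alpha pm q k1 n2 * alpha pm q k2 n1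
        = (P q k1 n1 * P q k2 n2) * (b k1 n1 * b k2 n2 - b k1 n2 * b k2 n1)"
      using kk nn P_swap[of q k1 n2 k2 n1]
      by (simp add: ab algebra_simps)
    also have "\<dots> \<ge> 0" using d P_pos[OF assms] by (intro mult_nonneg_nonneg) (auto intro: less_imp_le)
    finally show ?thesis .
  qed
  have main2: "0 \<le> alpha pm q k n * alpha pm q (k+1) (n+1) - alpha pm q (k+1) n * alpha pm q k (n+1)" for pm k n
    using main[of k "k+1" n "n+1" pm] by (simp add: mult.commute)
  show ?thesis using main main2 by blast
qed

end
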